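(* Let $R$ be a reflexive relation on $U$ such that $\mathrm{DM(RS)}$ is completely distributive. Then: (i) $\mathcal J^{-}=\{(\emptyset,\{x\}^{\blacktriangle})\mid \{x\}^{\blacktriangle}\in\mathcal J(\wp(U)^{\blacktriangle}),\ x\notin\mathcal S\}$; (ii) if $(\emptyset,\{x\}^{\blacktriangle})\in\mathcal J^{-}$, then for any $z\in\mathfrak{core}\breve R(x)$ we have $g(\emptyset,\{x\}^{\blacktriangle})=(\{z\}^{\vartriangle\blacktriangledown},\{z\}^{\vartriangle\blacktriangle})$, $z\notin\mathcal S$, and $\{z\}^{\vartriangle}$ is completely join-irreducible in $\wp(U)^{\vartriangle}$; (iii) $\mathcal J^{+}=\{(\{x\}^{\vartriangle\blacktriangledown},\{x\}^{\vartriangle\blacktriangle})\mid \{x\}^{\vartriangle}\in\mathcal J(\wp(U)^{\vartriangle}),\ x\notin\mathcal S\}$; (iv) $\mathcal J^{\circ}=\{(\{x\},\{x\}^{\blacktriangle})\mid x\in\mathcal S\}$.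
   Context: Let $U$ be a set and $R\subseteq U\times U$ a binary relation. For $x\in U$, $R(x)=\{y\in U\mid (x,y)\in R\}$ and $\breve R(x)=\{y\in U\mid (y,x)\in R\}$; $\mathfrak{core}\breve R(x)=\{w\in \breve R(x)\mid \text{for all }y\in U,\ w\in \breve R(y)\text{ implies }\breve R(x)\subseteq \breve R(y)\}$. For $X\subseteq U$: $X^{\blacktriangledown}=\{x\in U\mid R(x)\subseteq X\}$, $X^{\blacktriangle}=\{x\in U\mid R(x)\cap X\neq\emptyset\}$, $X^{\triangledown}=\{x\in U\mid \breve R(x)\subseteq X\}$, $X^{\vartriangle}=\{x\in U\mid \breve R(x)\cap X\neq\emptyset\}$; composites like $X^{\vartriangle\blacktriangledown}$ mean $(X^{\vartriangle})^{\blacktriangledown}$. $\wp(U)^{\blacktriangledown}=\{X^{\blacktriangledown}\mid X\subseteq U\}$, and similarly $\wp(U)^{\blacktriangle},\wp(U)^{\vartriangle}$, complete lattices under $\subseteq$. $\mathcal S=\{x\in U\mid |R(x)|=1\}$. $\mathrm{RS}=\{(X^{\blacktriangledown},X^{\blacktriangle})\mid X\subseteq U\}$ ordered coordinatewise; $\mathrm{DM(RS)}$ is its Dedekind–MacNeille completion, identified with $\{(A,B)\in\wp(U)^{\blacktriangledown}\times\wp(U)^{\blacktriangle}\mid A^{\vartriangle\blacktriangle}\subseteq B,\ A\cap\mathcal S=B\cap\mathcal S\}$ ordered coordinatewise, with meets $\bigwedge_i(X_i,Y_i)=(\bigcap_iX_i,(\bigcap_iY_i)^{\triangledown\blacktriangle})$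 and joins $\bigvee_i(X_i,Y_i)=((\bigcup_iX_i)^{\vartriangle\blacktriangledown},\bigcup_iY_i)$. For a complete lattice $L$, $\mathcal J(L)$ is its set of completely join-irreducible elements ($j$ with: $j=\bigvee S$ implies $j\in S$). When $\mathrm{DM(RS)}$ is distributive ($R$ reflexive), it is a Kleene algebra with $\sim(A,B)=(B^c,A^c)$. Writing $\mathcal J=\mathcal J(\mathrm{DM(RS)})$, define for $j\in\mathcal J$ the element $g(j)=\bigwedge\{a\in\mathrm{DM(RS)}\mid a\not\le\sim j\}$ (which lies in $\mathcal J$ and is comparable with $j$), and set $\mathcal J^{-}=\{j\in\mathcal J\mid j<g(j)\}$, $\mathcal J^{\circ}=\{j\in\mathcal J\mid j=g(j)\}$, $\mathcal J^{+}=\{j\in\mathcal J\mid j>g(j)\}$. *)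

theory Defs
  imports Main
begin

text \<open>The universe U is the type 'a (U = UNIV); R is a relation on it.\<close>

definition Rimg :: "('a \<times> 'a) set \<Rightarrow> 'a \<Rightarrow> 'a set" where
  "Rimg R x = {y. (x, y) \<in> R}"

definition Rinv :: "('a \<times> 'a) set \<Rightarrow> 'a \<Rightarrow> 'a set" where
  "Rinv R x = {y. (y, x) \<in> R}"

definition core :: "('a \<times> 'a) set \<Rightarrow> 'a \<Rightarrow> 'a set" where
  "core R x = {w \<in> Rinv R x. \<forall>y. w \<in> Rinv R y \<longrightarrow> Rinv R x \<subseteq> Rinv R y}"

definition ubox :: "('a \<times> 'a) set \<Rightarrow> 'a set \<Rightarrow> 'a set" where
  "ubox R X = {x. Rimg R x \<subseteq> X}"

definition udia :: "('a \<times> 'a) set \<Rightarrow> 'a set \<Rightarrow> 'a set" where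
  "udia R X = {x. Rimg R x \<inter> X \<noteq> {}}"

definition lbox :: "('a \<times> 'a) set \<Rightarrow> 'a set \<Rightarrow> 'a set" where
  "lbox R X = {x. Rinv R x \<subseteq> X}"

definition ldia :: "('a \<times> 'a) set \<Rightarrow> 'a set \<Rightarrow> 'a set" where
  "ldia R X = {x. Rinv R x \<inter> X \<noteq> {}}"

definition Sing :: "('a \<times> 'a) set \<Rightarrow> 'a set" where
  "Sing R = {x. card (Rimg R x) = 1}"

definition lub_in :: "('b \<Rightarrow> 'b \<Rightarrow> bool) \<Rightarrow> 'b set \<Rightarrow> 'b set \<Rightarrow> 'b \<Rightarrow> bool" where
  "lub_in le L S a \<longleftrightarrow> a \<in> L \<and> (\<forall>s\<in>S. le s a) \<and> (\<forall>b\<in>L. (\<forall>s\<in>S. le s b) \<longrightarrow> le a b)"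

definition glb_in :: "('b \<Rightarrow> 'b \<Rightarrow> bool) \<Rightarrow> 'b set \<Rightarrow> 'b set \<Rightarrow> 'b \<Rightarrow> bool" where
  "glb_in le L S a \<longleftrightarrow> a \<in> L \<and> (\<forall>s\<in>S. le a s) \<and> (\<forall>b\<in>L. (\<forall>s\<in>S. le b s) \<longrightarrow> le b a)"

definition Sup_in :: "('b \<Rightarrow> 'b \<Rightarrow> bool) \<Rightarrow> 'b set \<Rightarrow> 'b set \<Rightarrow> 'b" where
  "Sup_in le L S = (THE a. lub_in le L S a)"

definition Inf_in :: "('b \<Rightarrow> 'b \<Rightarrow> bool) \<Rightarrow> 'b set \<Rightarrow> 'b set \<Rightarrow> 'b" where
  "Inf_in le L S = (THE a. glb_in le L S a)"

definition cji :: "('b \<Rightarrow> 'b \<Rightarrow> bool) \<Rightarrow> 'b set \<Rightarrow> 'b \<Rightarrow> bool" where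
  "cji le L j \<longleftrightarrow> j \<in> L \<and> (\<forall>S. S \<subseteq> L \<longrightarrow> lub_in le L S j \<longrightarrow> j \<in> S)"

definition completely_distributive :: "('b \<Rightarrow> 'b \<Rightarrow> bool) \<Rightarrow> 'b set \<Rightarrow> bool" where
  "completely_distributive le L \<longleftrightarrow>
     (\<forall>\<A>. \<A> \<subseteq> Pow L \<longrightarrow>
        Inf_in le L (Sup_in le L ` \<A>) =
        Sup_in le L {Inf_in le L (f ` \<A>) | f. \<forall>A\<in>\<A>. f A \<in> A})"

definition ple :: "'a set \<times> 'a set \<Rightarrow> 'a set \<times> 'a set \<Rightarrow> bool" where
  "ple p q \<longleftrightarrow> fst p \<subseteq> fst q \<and> snd p \<subseteq> snd q"

definition plt :: "'a set \<times> 'a set \<Rightarrow> 'a set \<times> 'a set \<Rightarrow> bool" where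
  "plt p q \<longleftrightarrow> ple p q \<and> p \<noteq> q"

definition DM :: "('a \<times> 'a) set \<Rightarrow> ('a set \<times> 'a set) set" where
  "DM R = {(A, B). A \<in> range (ubox R) \<and> B \<in> range (udia R) \<and>
                   udia R (ldia R A) \<subseteq> B \<and> A \<inter> Sing R = B \<inter> Sing R}"

definition kneg :: "'a set \<times> 'a set \<Rightarrow> 'a set \<times> 'a set" where
  "kneg p = (- snd p, - fst p)"

definition JDM :: "('a \<times> 'a) set \<Rightarrow> ('a set \<times> 'a set) set" where
  "JDM R = {j. cji ple (DM R) j}"

definition gmap :: "('a \<times> 'a) set \<Rightarrow> 'a set \<times> 'a set \<Rightarrow> 'a set \<times> 'a set" where
  "gmap R j = Inf_in ple (DM R) {a \<in> DM R. \<not> ple a (kneg j)}"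

definition Jminus :: "('a \<times> 'a) set \<Rightarrow> ('a set \<times> 'a set) set" where
  "Jminus R = {j \<in> JDM R. plt j (gmap R j)}"

definition Jcirc :: "('a \<times> 'a) set \<Rightarrow> ('a set \<times> 'a set) set" where
  "Jcirc R = {j \<in> JDM R. j = gmap R j}"

definition Jplus :: "('a \<times> 'a) set \<Rightarrow> ('a set \<times> 'a set) set" where
  "Jplus R = {j \<in> JDM R. plt (gmap R j) j}"

end

theory Submission
  imports Defs
begin


lemma ubox_mem: "x \<in> ubox R X \<longleftrightarrow> (\<forall>y. (x,y) \<in> R \<longrightarrow> y \<in> X)"
  by (auto simp: ubox_def Rimg_def)
lemma udia_mem: "x \<in> udia R X \<longleftrightarrow> (\<exists>y. (x,y) \<in> R \<and> y \<in> X)"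
  by (auto simp: udia_def Rimg_def)
lemma lbox_mem: "x \<in> lbox R X \<longleftrightarrow> (\<forall>y. (y,x) \<in> R \<longrightarrow> y \<in> X)"
  by (auto simp: lbox_def Rinv_def)
lemma ldia_mem: "x \<in> ldia R X \<longleftrightarrow> (\<exists>y. (y,x) \<in> R \<and> y \<in> X)"
  by (auto simp: ldia_def Rinv_def)

lemmas mems = ubox_mem udia_mem lbox_mem ldia_mem

lemma Sing_mem: assumes "refl R" shows "x \<in> Sing R \<longleftrightarrow> (\<forall>y. (x,y) \<in> R \<longrightarrow> y = x)"
proof -
  have xx: "x \<in> Rimg R x" using reflD[OF assms] by (simp add: Rimg_def)
  have "x \<in> Sing R \<longleftrightarrow> Rimg R x = {x}"
    unfolding Sing_def using xx by (auto simp: card_1_singleton_iff)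
  also have "\<dots> \<longleftrightarrow> (\<forall>y. (x,y) \<in> R \<longrightarrow> y = x)" using xx by (auto simp: Rimg_def)
  finally show ?thesis .
qed

lemma range_ubox: "A \<in> range (ubox R) \<longleftrightarrow> ubox R (ldia R A) = A"
proof
  assume "A \<in> range (ubox R)" then obtain Z where "A = ubox R Z" by auto
  then show "ubox R (ldia R A) = A" by (simp add: set_eq_iff mems) blast
next
  assume "ubox R (ldia R A) = A" then show "A \<in> range (ubox R)" by (metis rangeI)
qed

lemma range_udia: "B \<in> range (udia R) \<longleftrightarrow> udia R (lbox R B) = B"
proof
  assume "B \<in> range (udia R)" then obtain Z where "B = udia R Z" by auto
  then show "udia R (lbox R B) = B" by (simp add: set_eq_iff mems) blast
next
  assume "udia R (lbox R B) = B" then show "B \<in> range (udia R)" by (metis rangeI)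
qed

lemma range_ldia: "B \<in> range (ldia R) \<longleftrightarrow> ldia R (ubox R B) = B"
proof
  assume "B \<in> range (ldia R)" then obtain Z where "B = ldia R Z" by auto
  then show "ldia R (ubox R B) = B" by (simp add: set_eq_iff mems) blast
next
  assume "ldia R (ubox R B) = B" then show "B \<in> range (ldia R)" by (metis rangeI)
qed

lemma DM_mem: "(A,B) \<in> DM R \<longleftrightarrow> ubox R (ldia R A) = A \<and> udia R (lbox R B) = B \<and>
   udia R (ldia R A) \<subseteq> B \<and> A \<inter> Sing R = B \<inter> Sing R"
  unfolding DM_def by (simp add: range_ubox range_udia)

definition SupD :: "('a \<times> 'a) set \<Rightarrow> ('a set \<times> 'a set) set \<Rightarrow> 'a set \<times> 'a set" where
  "SupD R S = (ubox R (ldia R (\<Union>(fst ` S))), \<Union>(snd ` S))"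
definition InfD :: "('a \<times> 'a) set \<Rightarrow> ('a set \<times> 'a set) set \<Rightarrow> 'a set \<times> 'a set" where
  "InfD R S = (\<Inter>(fst ` S), udia R (lbox R (\<Inter>(snd ` S))))"

lemma DMD:
  assumes "p \<in> DM R"
  shows "ubox R (ldia R (fst p)) = fst p" "udia R (lbox R (snd p)) = snd p"
    "udia R (ldia R (fst p)) \<subseteq> snd p" "fst p \<inter> Sing R = snd p \<inter> Sing R"
proof -
  obtain A B where p: "p = (A,B)" by fastforce
  have "(A,B) \<in> DM R" using assms p by simp
  then have "ubox R (ldia R A) = A \<and> udia R (lbox R B) = B \<and>
   udia R (ldia R A) \<subseteq> B \<and> A \<inter> Sing R = B \<inter> Sing R" by (simp only: DM_mem)
  then show "ubox R (ldia R (fst p)) = fst p" "udia R (lbox R (snd p)) = snd p"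
    "udia R (ldia R (fst p)) \<subseteq> snd p" "fst p \<inter> Sing R = snd p \<inter> Sing R" using p by simp_all
qed

lemma DMI: "ubox R (ldia R A) = A \<Longrightarrow> udia R (lbox R B) = B \<Longrightarrow>
   udia R (ldia R A) \<subseteq> B \<Longrightarrow> A \<inter> Sing R = B \<inter> Sing R \<Longrightarrow> (A,B) \<in> DM R"
  by (simp only: DM_mem)

lemma ple_antisym: "ple p q \<Longrightarrow> ple q p \<Longrightarrow> p = q"
  by (auto simp: ple_def prod_eq_iff)

lemma lub_unique: "lub_in ple L S a \<Longrightarrow> lub_in ple L S b \<Longrightarrow> a = b"
  unfolding lub_in_def by (meson ple_antisym)
lemma glb_unique: "glb_in ple L S a \<Longrightarrow> glb_in ple L S b \<Longrightarrow> a = b"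
  unfolding glb_in_def by (meson ple_antisym)


lemma ul_ubox: "ubox R (ldia R (ubox R Z)) = ubox R Z" by (simp add: set_eq_iff mems) blast
lemma ud_udia: "udia R (lbox R (udia R Z)) = udia R Z" by (simp add: set_eq_iff mems) blast
lemma ld_ub_sub: "ldia R (ubox R Z) \<subseteq> Z" by (auto simp: mems)
lemma ud_lb_sub: "udia R (lbox R Z) \<subseteq> Z" by (auto simp: mems)
lemma sub_ub_ld: "Z \<subseteq> ubox R (ldia R Z)" by (auto simp: mems)
lemma ubox_mono: "X \<subseteq> Y \<Longrightarrow> ubox R X \<subseteq> ubox R Y" by (simp add: subset_iff mems; blast)
lemma udia_mono: "X \<subseteq> Y \<Longrightarrow> udia R X \<subseteq> udia R Y" by (simp add: subset_iff mems; blast)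
lemma ldia_mono: "X \<subseteq> Y \<Longrightarrow> ldia R X \<subseteq> ldia R Y" by (simp add: subset_iff mems; blast)
lemma lbox_mono: "X \<subseteq> Y \<Longrightarrow> lbox R X \<subseteq> lbox R Y" by (simp add: subset_iff mems; blast)
lemma compl_udia: "- udia R X = ubox R (-X)" by (auto simp: mems)
lemma compl_ubox: "- ubox R X = udia R (-X)" by (auto simp: mems)
lemma compl_ldia: "- ldia R X = lbox R (-X)" by (auto simp: mems)
lemma compl_lbox: "- lbox R X = ldia R (-X)" by (auto simp: mems)

lemma ple_trans: "ple a b \<Longrightarrow> ple b c \<Longrightarrow> ple a c" by (auto simp: ple_def)
lemma ple_refl: "ple a a" by (auto simp: ple_def)

lemma lub_udia_iff:
  assumes "T \<subseteq> range (udia R)"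
  shows "lub_in (\<subseteq>) (range (udia R)) T t \<longleftrightarrow> t = \<Union>T"
proof -
  have "\<Union>T \<subseteq> udia R (lbox R (\<Union>T))"
  proof
    fix x assume "x \<in> \<Union>T"
    then obtain t where t: "t \<in> T" "x \<in> t" by blast
    then have "t \<in> range (udia R)" using assms by blast
    then have "t = udia R (lbox R t)" by (simp only: range_udia)
    moreover have "udia R (lbox R t) \<subseteq> udia R (lbox R (\<Union>T))"
      by (rule udia_mono, rule lbox_mono) (use t in blast)
    ultimately show "x \<in> udia R (lbox R (\<Union>T))" using t by blast
  qed
  then have "udia R (lbox R (\<Union>T)) = \<Union>T" by (rule subset_antisym[OF ud_lb_sub])
  then have U: "\<Union>T \<in> range (udia R)" by (rule image_eqI[OF sym UNIV_I])
  show ?thesis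
  proof
    assume H: "lub_in (\<subseteq>) (range (udia R)) T t"
    then have "\<forall>s\<in>T. s \<subseteq> t" unfolding lub_in_def by (elim conjE)
    then have a: "\<Union>T \<subseteq> t" by blast
    have "\<forall>b\<in>range (udia R). (\<forall>s\<in>T. s \<subseteq> b) \<longrightarrow> t \<subseteq> b" using H unfolding lub_in_def by (elim conjE)
    then have "t \<subseteq> \<Union>T" using U by (meson Union_upper)
    with a show "t = \<Union>T" by (rule subset_antisym[rotated])
  next
    assume "t = \<Union>T"
    then show "lub_in (\<subseteq>) (range (udia R)) T t" using U unfolding lub_in_def by (simp add: Union_upper Union_least)
  qed
qed

lemma lub_ldia_iff:
  assumes "T \<subseteq> range (ldia R)"
  shows "lub_in (\<subseteq>) (range (ldia R)) T t \<longleftrightarrow> t = \<Union>T"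
proof -
  have "\<Union>T \<subseteq> ldia R (ubox R (\<Union>T))"
  proof
    fix x assume "x \<in> \<Union>T"
    then obtain t where t: "t \<in> T" "x \<in> t" by blast
    then have "t \<in> range (ldia R)" using assms by blast
    then have "t = ldia R (ubox R t)" by (simp only: range_ldia)
    moreover have "ldia R (ubox R t) \<subseteq> ldia R (ubox R (\<Union>T))"
      by (rule ldia_mono, rule ubox_mono) (use t in blast)
    ultimately show "x \<in> ldia R (ubox R (\<Union>T))" using t by blast
  qed
  then have "ldia R (ubox R (\<Union>T)) = \<Union>T" by (rule subset_antisym[OF ld_ub_sub])
  then have U: "\<Union>T \<in> range (ldia R)" by (rule image_eqI[OF sym UNIV_I])
  show ?thesis
  proof
    assume H: "lub_in (\<subseteq>) (range (ldia R)) T t"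
    then have "\<forall>s\<in>T. s \<subseteq> t" unfolding lub_in_def by (elim conjE)
    then have a: "\<Union>T \<subseteq> t" by blast
    have "\<forall>b\<in>range (ldia R). (\<forall>s\<in>T. s \<subseteq> b) \<longrightarrow> t \<subseteq> b" using H unfolding lub_in_def by (elim conjE)
    then have "t \<subseteq> \<Union>T" using U by (meson Union_upper)
    with a show "t = \<Union>T" by (rule subset_antisym[rotated])
  next
    assume "t = \<Union>T"
    then show "lub_in (\<subseteq>) (range (ldia R)) T t" using U unfolding lub_in_def by (simp add: Union_upper Union_least)
  qed
qed

lemma kneg_invol: "kneg (kneg p) = p" by (simp add: kneg_def)
lemma ple_kneg: "ple a (kneg b) \<longleftrightarrow> ple b (kneg a)" by (auto simp: ple_def kneg_def)

lemma kneg_DM: assumes "p \<in> DM R" shows "kneg p \<in> DM R"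
proof -
  obtain A B where p: "p = (A,B)" by fastforce
  note D = DMD[OF assms, unfolded p fst_conv snd_conv]
  have "- B = ubox R (- lbox R B)" using compl_udia[of R "lbox R B"] D(2) by simp
  then have 1: "- B \<in> range (ubox R)" by (rule image_eqI[OF _ UNIV_I])
  have "- A = udia R (- ldia R A)" using compl_ubox[of R "ldia R A"] D(1) by simp
  then have 2: "- A \<in> range (udia R)" by (rule image_eqI[OF _ UNIV_I])
  have 3: "udia R (ldia R (-B)) \<subseteq> -A"
  proof
    fix x assume "x \<in> udia R (ldia R (-B))"
    then obtain y v where "(x,y) \<in> R" "(v,y) \<in> R" "v \<notin> B" by (auto simp: mems)
    moreover have "x \<in> A \<Longrightarrow> v \<in> udia R (ldia R A)" using calculation by (auto simp: mems)
    ultimately show "x \<in> -A" using D(3) by blast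
  qed
  have 4: "- B \<inter> Sing R = - A \<inter> Sing R" using D(4) by blast
  have c1: "ubox R (ldia R (-B)) = -B" using 1 by (simp only: range_ubox)
  have c2: "udia R (lbox R (-A)) = -A" using 2 by (simp only: range_udia)
  show ?thesis unfolding p kneg_def fst_conv snd_conv
    by (rule DMI[OF c1 c2 3 4])
qed

abbreviation bb :: "('a \<times> 'a) set \<Rightarrow> 'a \<Rightarrow> 'a set \<times> 'a set" where
  "bb R y \<equiv> ({}, udia R {y})"
abbreviation aa :: "('a \<times> 'a) set \<Rightarrow> 'a \<Rightarrow> 'a set \<times> 'a set" where
  "aa R x \<equiv> (ubox R (ldia R {x}), udia R (ldia R {x}))"

context fixes R :: "('a \<times> 'a) set" assumes rR: "refl R"
begin

lemma Rxx: "(x,x) \<in> R" using reflD[OF rR] .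
lemma sub_udia: "X \<subseteq> udia R X" unfolding subset_iff mems using Rxx by blast
lemma sub_ldia: "X \<subseteq> ldia R X" unfolding subset_iff mems using Rxx by blast
lemma ubox_sub: "ubox R X \<subseteq> X" using Rxx by (auto simp: mems)
lemma lbox_sub: "lbox R X \<subseteq> X" using Rxx by (auto simp: mems)
lemma ubox_empty: "ubox R {} = {}" using ubox_sub by blast
lemma SingD: "x \<in> Sing R \<Longrightarrow> (x,y) \<in> R \<Longrightarrow> y = x" using Sing_mem[OF rR, of x] by blast
lemma SingI: "(\<And>y. (x,y) \<in> R \<Longrightarrow> y = x) \<Longrightarrow> x \<in> Sing R" using Sing_mem[OF rR, of x] by blast

end


context fixes R :: "('a \<times> 'a) set" assumes rR: "refl R"
begin

lemmas Rx3 = Rxx[OF rR]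
lemmas SD3 = SingD[OF rR]
lemmas SI3 = SingI[OF rR]

lemma SupD_DM: assumes "S \<subseteq> DM R" shows "SupD R S \<in> DM R"
proof -
  have S: "ubox R (ldia R A) = A \<and> udia R (lbox R B) = B \<and>
   udia R (ldia R A) \<subseteq> B \<and> A \<inter> Sing R = B \<inter> Sing R" if "(A,B) \<in> S" for A B
  proof -
    have "(A,B) \<in> DM R" using assms that by blast
    from DMD[OF this] show ?thesis by simp
  qed
  define A0 where "A0 = \<Union>(fst ` S)"
  define B0 where "B0 = \<Union>(snd ` S)"
  have 1: "ubox R (ldia R (ubox R (ldia R A0))) = ubox R (ldia R A0)" by (rule ul_ubox)
  have 2: "udia R (lbox R B0) = B0"
  proof (rule subset_antisym[OF ud_lb_sub])
    show "B0 \<subseteq> udia R (lbox R B0)"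
    proof
      fix x assume "x \<in> B0"
      then obtain A B where ab: "(A,B) \<in> S" "x \<in> B" unfolding B0_def by auto
      then have "x \<in> udia R (lbox R B)" using S[OF ab(1)] by simp
      moreover have "lbox R B \<subseteq> lbox R B0" using ab unfolding B0_def by (intro lbox_mono) force
      ultimately show "x \<in> udia R (lbox R B0)" using udia_mono by blast
    qed
  qed
  have 3: "udia R (ldia R (ubox R (ldia R A0))) \<subseteq> B0"
  proof
    fix x assume "x \<in> udia R (ldia R (ubox R (ldia R A0)))"
    then have "x \<in> udia R (ldia R A0)" using udia_mono[OF ld_ub_sub[of R]] by blast
    then obtain y w A B where "(x,y) \<in> R" "(w,y) \<in> R" "w \<in> A" "(A,B) \<in> S"
      unfolding A0_def by (auto simp: mems)
    then have "x \<in> udia R (ldia R A)" "(A,B) \<in> S" by (auto simp: mems)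
    then have "x \<in> B" "(A,B) \<in> S" using S by blast+
    then show "x \<in> B0" unfolding B0_def by force
  qed
  have 4: "ubox R (ldia R A0) \<inter> Sing R = B0 \<inter> Sing R"
  proof (intro equalityI subsetI)
    fix y assume y: "y \<in> ubox R (ldia R A0) \<inter> Sing R"
    from y have "y \<in> ldia R A0" using Rx3 by (auto simp: mems)
    then obtain w A B where w: "(w,y) \<in> R" "w \<in> A" "(A,B) \<in> S" unfolding A0_def by (auto simp: mems)
    then have "y \<in> udia R (ldia R A)" using Rx3 by (auto simp: mems)
    then have "y \<in> B" using S[OF w(3)] by blast
    then show "y \<in> B0 \<inter> Sing R" using w y unfolding B0_def by force
  next
    fix y assume y: "y \<in> B0 \<inter> Sing R"
    then obtain A B where ab: "(A,B) \<in> S" "y \<in> B" "y \<in> Sing R" unfolding B0_def by auto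
    then have "y \<in> A" using S[OF ab(1)] by blast
    then have "y \<in> A0" using ab unfolding A0_def by force
    moreover have "\<And>v. (y,v) \<in> R \<Longrightarrow> v = y" using ab SD3 by blast
    ultimately show "y \<in> ubox R (ldia R A0) \<inter> Sing R" using ab Rx3 by (auto simp: mems)
  qed
  show ?thesis unfolding SupD_def A0_def[symmetric] B0_def[symmetric] by (rule DMI[OF 1 2 3 4])
qed

lemma lub_SupD: assumes "S \<subseteq> DM R" shows "lub_in ple (DM R) S (SupD R S)"
proof -
  have ub: "\<forall>s\<in>S. ple s (SupD R S)"
  proof
    fix s assume s: "s \<in> S"
    have "fst s \<subseteq> \<Union>(fst ` S)" using s by blast
    then have "ubox R (ldia R (fst s)) \<subseteq> ubox R (ldia R (\<Union>(fst ` S)))" by (intro ubox_mono ldia_mono)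
    moreover have "ubox R (ldia R (fst s)) = fst s" using DMD(1) assms s by blast
    ultimately show "ple s (SupD R S)" using s unfolding ple_def SupD_def by force
  qed
  have least: "\<forall>b\<in>DM R. (\<forall>s\<in>S. ple s b) \<longrightarrow> ple (SupD R S) b"
  proof (intro ballI impI)
    fix b assume b: "b \<in> DM R" "\<forall>s\<in>S. ple s b"
    have C: "ubox R (ldia R (fst b)) = fst b" using DMD(1)[OF b(1)] .
    have "\<Union>(fst ` S) \<subseteq> fst b" "\<Union>(snd ` S) \<subseteq> snd b" using b unfolding ple_def by auto
    then have "ubox R (ldia R (\<Union>(fst ` S))) \<subseteq> ubox R (ldia R (fst b))" by (intro ubox_mono ldia_mono)
    then show "ple (SupD R S) b" using C \<open>\<Union>(snd ` S) \<subseteq> snd b\<close> unfolding ple_def SupD_def by auto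
  qed
  show ?thesis unfolding lub_in_def using SupD_DM[OF assms] ub least by blast
qed

lemma InfD_DM: assumes "S \<subseteq> DM R" shows "InfD R S \<in> DM R"
proof -
  have S: "ubox R (ldia R (fst s)) = fst s \<and> udia R (lbox R (snd s)) = snd s \<and>
   udia R (ldia R (fst s)) \<subseteq> snd s \<and> fst s \<inter> Sing R = snd s \<inter> Sing R" if "s \<in> S" for s
    using DMD[of s R] assms that by blast
  define A0 where "A0 = \<Inter>(fst ` S)"
  define B0 where "B0 = \<Inter>(snd ` S)"
  have 1: "ubox R (ldia R A0) = A0"
  proof (rule subset_antisym[OF _ sub_ub_ld])
    show "ubox R (ldia R A0) \<subseteq> A0"
    proof
      fix x assume x: "x \<in> ubox R (ldia R A0)"
      show "x \<in> A0" unfolding A0_def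
      proof (rule InterI)
        fix a assume "a \<in> fst ` S"
        then obtain s where s: "s \<in> S" "a = fst s" by blast
        have "A0 \<subseteq> fst s" using s unfolding A0_def by blast
        then have "ubox R (ldia R A0) \<subseteq> ubox R (ldia R (fst s))" by (intro ubox_mono ldia_mono)
        then show "x \<in> a" using x S[OF s(1)] s(2) by blast
      qed
    qed
  qed
  have 2: "udia R (lbox R (udia R (lbox R B0))) = udia R (lbox R B0)" by (rule ud_udia)
  have key: "\<forall>v. (v,y) \<in> R \<longrightarrow> v \<in> B0" if "y \<in> ldia R A0" for y
  proof (intro allI impI)
    fix v assume v: "(v,y) \<in> R"
    show "v \<in> B0" unfolding B0_def
    proof (rule InterI)
      fix b assume "b \<in> snd ` S"
      then obtain s where s: "s \<in> S" "b = snd s" by blast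
      have "A0 \<subseteq> fst s" using s unfolding A0_def by blast
      then have "y \<in> ldia R (fst s)" using that ldia_mono by blast
      then have "v \<in> udia R (ldia R (fst s))" using v by (auto simp: mems)
      then show "v \<in> b" using S[OF s(1)] s(2) by blast
    qed
  qed
  have 3: "udia R (ldia R A0) \<subseteq> udia R (lbox R B0)"
  proof
    fix x assume "x \<in> udia R (ldia R A0)"
    then obtain y where y: "(x,y) \<in> R" "y \<in> ldia R A0" by (auto simp: mems)
    then have "y \<in> lbox R B0" using key by (auto simp: mems)
    then show "x \<in> udia R (lbox R B0)" using y by (auto simp: mems)
  qed
  have 4: "A0 \<inter> Sing R = udia R (lbox R B0) \<inter> Sing R"
  proof (intro equalityI subsetI)
    fix y assume y: "y \<in> A0 \<inter> Sing R"
    then have "y \<in> ldia R A0" using sub_ldia[OF rR] by blast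
    then have "y \<in> lbox R B0" using key by (auto simp: mems)
    then show "y \<in> udia R (lbox R B0) \<inter> Sing R" using y sub_udia[OF rR] by blast
  next
    fix y assume y: "y \<in> udia R (lbox R B0) \<inter> Sing R"
    then obtain v where v: "(y,v) \<in> R" "v \<in> lbox R B0" by (auto simp: mems)
    then have "v = y" using y SD3 by blast
    then have yB: "y \<in> B0" using v Rx3 by (auto simp: mems)
    show "y \<in> A0 \<inter> Sing R" unfolding A0_def
    proof (intro IntI InterI)
      fix a assume "a \<in> fst ` S"
      then obtain s where s: "s \<in> S" "a = fst s" by blast
      have "y \<in> snd s \<inter> Sing R" using yB y s unfolding B0_def by blast
      then show "y \<in> a" using S[OF s(1)] s(2) by blast
    qed (use y in blast)
  qed
  show ?thesis unfolding InfD_def A0_def[symmetric] B0_def[symmetric] by (rule DMI[OF 1 2 3 4])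
qed

lemma glb_InfD: assumes "S \<subseteq> DM R" shows "glb_in ple (DM R) S (InfD R S)"
proof -
  have lb: "\<forall>s\<in>S. ple (InfD R S) s"
  proof
    fix s assume s: "s \<in> S"
    have "udia R (lbox R (\<Inter>(snd ` S))) \<subseteq> \<Inter>(snd ` S)" by (rule ud_lb_sub)
    then show "ple (InfD R S) s" using s unfolding ple_def InfD_def by force
  qed
  have gr: "\<forall>b\<in>DM R. (\<forall>s\<in>S. ple b s) \<longrightarrow> ple b (InfD R S)"
  proof (intro ballI impI)
    fix b assume b: "b \<in> DM R" "\<forall>s\<in>S. ple b s"
    have D: "udia R (lbox R (snd b)) = snd b" using DMD(2)[OF b(1)] .
    have "fst b \<subseteq> \<Inter>(fst ` S)" "snd b \<subseteq> \<Inter>(snd ` S)" using b unfolding ple_def by auto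
    moreover have "udia R (lbox R (snd b)) \<subseteq> udia R (lbox R (\<Inter>(snd ` S)))"
      using calculation(2) by (intro udia_mono lbox_mono)
    ultimately show "ple b (InfD R S)" using D unfolding ple_def InfD_def by auto
  qed
  show ?thesis unfolding glb_in_def using InfD_DM[OF assms] lb gr by blast
qed

lemma Sup_in_eq: "S \<subseteq> DM R \<Longrightarrow> Sup_in ple (DM R) S = SupD R S"
  unfolding Sup_in_def by (rule the_equality) (auto intro: lub_SupD lub_unique)
lemma Inf_in_eq: "S \<subseteq> DM R \<Longrightarrow> Inf_in ple (DM R) S = InfD R S"
  unfolding Inf_in_def by (rule the_equality) (auto intro: glb_InfD glb_unique)

lemma lub_eq: "S \<subseteq> DM R \<Longrightarrow> lub_in ple (DM R) S j \<Longrightarrow> j = SupD R S"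
  using lub_SupD lub_unique by blast

lemma Inf_min: assumes "m \<in> S" "S \<subseteq> DM R" "\<forall>s\<in>S. ple m s" shows "Inf_in ple (DM R) S = m"
proof -
  have g: "glb_in ple (DM R) S m" unfolding glb_in_def using assms by blast
  show ?thesis unfolding Inf_in_def by (rule the_equality) (use g glb_unique in blast)+
qed

lemma Inf_le: "s \<in> S \<Longrightarrow> S \<subseteq> DM R \<Longrightarrow> ple (Inf_in ple (DM R) S) s"
  using glb_InfD Inf_in_eq unfolding glb_in_def by metis

end


context fixes R :: "('a \<times> 'a) set" assumes rR: "refl R"
begin

lemmas Rx4 = Rxx[OF rR]
lemmas SD4 = SingD[OF rR]
lemmas SI4 = SingI[OF rR]

lemma ldia_empty: "ldia R {} = {}" by (auto simp: mems)

lemma bb_disj: "y \<notin> Sing R \<Longrightarrow> udia R {y} \<inter> Sing R = {}"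
proof (rule ccontr)
  assume y: "y \<notin> Sing R" and "udia R {y} \<inter> Sing R \<noteq> {}"
  then obtain v where "v \<in> udia R {y}" "v \<in> Sing R" by blast
  then have "(v,y) \<in> R" "v \<in> Sing R" by (auto simp: mems)
  then have "y = v" using SD4 by blast
  then show False using y \<open>v \<in> Sing R\<close> by simp
qed

lemma bb_DM: "y \<notin> Sing R \<Longrightarrow> bb R y \<in> DM R"
proof (rule DMI)
  show "ubox R (ldia R {}) = {}" using ldia_empty ubox_empty[OF rR] by simp
  show "udia R (lbox R (udia R {y})) = udia R {y}" by (rule ud_udia)
  show "udia R (ldia R {}) \<subseteq> udia R {y}" by (auto simp: mems)
  assume "y \<notin> Sing R" then show "{} \<inter> Sing R = udia R {y} \<inter> Sing R" using bb_disj by blast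
qed

lemma bb_notS: assumes "bb R y \<in> DM R" shows "y \<notin> Sing R"
proof
  assume "y \<in> Sing R"
  moreover have "y \<in> udia R {y}" using Rx4 by (auto simp: mems)
  ultimately show False using DMD(4)[OF assms] by auto
qed

lemma aa_fst: "x \<in> ubox R (ldia R {x})" by (auto simp: mems)

lemma aa_DM: "aa R x \<in> DM R"
proof (rule DMI)
  show "ubox R (ldia R (ubox R (ldia R {x}))) = ubox R (ldia R {x})" by (rule ul_ubox)
  show "udia R (lbox R (udia R (ldia R {x}))) = udia R (ldia R {x})" by (rule ud_udia)
  show "udia R (ldia R (ubox R (ldia R {x}))) \<subseteq> udia R (ldia R {x})" by (rule udia_mono[OF ld_ub_sub])
  have "y \<in> ubox R (ldia R {x}) \<longleftrightarrow> y \<in> udia R (ldia R {x})" if "y \<in> Sing R" for y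
  proof -
    have s: "\<And>v. (y,v) \<in> R \<Longrightarrow> v = y" using SD4 that by blast
    have "y \<in> ubox R (ldia R {x}) \<longleftrightarrow> (x,y) \<in> R" using s Rx4 by (auto simp: mems)
    moreover have "y \<in> udia R (ldia R {x}) \<longleftrightarrow> (x,y) \<in> R" using s Rx4 by (auto simp: mems)
    ultimately show ?thesis by simp
  qed
  then show "ubox R (ldia R {x}) \<inter> Sing R = udia R (ldia R {x}) \<inter> Sing R" by blast
qed

lemma aa_ne_bb: "aa R x \<noteq> bb R y" using aa_fst by fastforce

lemma decomp: assumes p: "p \<in> DM R"
  shows "p = SupD R (aa R ` fst p \<union> bb R ` (lbox R (snd p) - Sing R))"
proof -
  define A where "A = fst p"
  define B where "B = snd p"
  define S' where "S' = aa R ` A \<union> bb R ` (lbox R B - Sing R)"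
  note D = DMD[OF p, folded A_def B_def]
  have f: "\<Union>(fst ` S') = A"
  proof (intro equalityI subsetI)
    fix v assume "v \<in> \<Union>(fst ` S')"
    then obtain x where x: "x \<in> A" "v \<in> ubox R (ldia R {x})" unfolding S'_def by auto
    have "ubox R (ldia R {x}) \<subseteq> ubox R (ldia R A)" using x(1) by (intro ubox_mono ldia_mono) simp
    then show "v \<in> A" using x(2) D(1) by blast
  next
    fix v assume "v \<in> A"
    then have "aa R v \<in> S'" "v \<in> fst (aa R v)" unfolding S'_def using aa_fst by auto
    then show "v \<in> \<Union>(fst ` S')" by blast
  qed
  have s: "\<Union>(snd ` S') = B"
  proof (intro equalityI subsetI)
    fix v assume "v \<in> \<Union>(snd ` S')"
    then consider x where "x \<in> A" "v \<in> udia R (ldia R {x})"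
      | y where "y \<in> lbox R B" "v \<in> udia R {y}" unfolding S'_def by auto
    then show "v \<in> B"
    proof cases
      case 1
      have "udia R (ldia R {x}) \<subseteq> udia R (ldia R A)" using 1(1) by (intro udia_mono ldia_mono) simp
      then show ?thesis using 1(2) D(3) by blast
    next
      case 2
      have "udia R {y} \<subseteq> udia R (lbox R B)" using 2(1) by (intro udia_mono) simp
      then show ?thesis using 2(2) D(2) by blast
    qed
  next
    fix b assume "b \<in> B"
    then have "b \<in> udia R (lbox R B)" using D(2) by simp
    then obtain y where y: "(b,y) \<in> R" "y \<in> lbox R B" by (auto simp: mems)
    show "b \<in> \<Union>(snd ` S')"
    proof (cases "y \<in> Sing R")
      case False
      then have "bb R y \<in> S'" unfolding S'_def using y by blast
      moreover have "b \<in> udia R {y}" using y by (auto simp: mems)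
      ultimately show ?thesis by force
    next
      case True
      have "y \<in> B" using y(2) lbox_sub[OF rR] by blast
      then have "y \<in> A" using True D(4) by blast
      then have "aa R y \<in> S'" unfolding S'_def by blast
      moreover have "b \<in> udia R (ldia R {y})" using y Rx4 by (auto simp: mems)
      ultimately show ?thesis by force
    qed
  qed
  have "SupD R S' = (A, B)" unfolding SupD_def f s using D(1) by simp
  then show ?thesis unfolding S'_def A_def B_def by simp
qed

lemma JDM_cases: assumes "j \<in> JDM R"
  shows "(\<exists>x. j = aa R x) \<or> (\<exists>y. y \<notin> Sing R \<and> j = bb R y)"
proof -
  have c: "cji ple (DM R) j" using assms unfolding JDM_def by simp
  then have jD: "j \<in> DM R" unfolding cji_def by simp
  define S' where "S' = aa R ` fst j \<union> bb R ` (lbox R (snd j) - Sing R)"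
  have SD4': "S' \<subseteq> DM R" unfolding S'_def using aa_DM bb_DM by blast
  have "lub_in ple (DM R) S' j" using lub_SupD[OF rR SD4'] decomp[OF jD] unfolding S'_def by simp
  then have "j \<in> S'" using c SD4' unfolding cji_def by blast
  then show ?thesis unfolding S'_def by blast
qed

lemma C1: assumes y: "y \<notin> Sing R"
  shows "cji ple (DM R) (bb R y) \<longleftrightarrow> cji (\<subseteq>) (range (udia R)) (udia R {y})"
proof
  assume c: "cji ple (DM R) (bb R y)"
  show "cji (\<subseteq>) (range (udia R)) (udia R {y})" unfolding cji_def
  proof (intro conjI allI impI)
    show "udia R {y} \<in> range (udia R)" by blast
    fix T assume T: "T \<subseteq> range (udia R)" "lub_in (\<subseteq>) (range (udia R)) T (udia R {y})"
    then have U: "udia R {y} = \<Union>T" using lub_udia_iff by blast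
    define S' where "S' = (\<lambda>t. ({}::'a set, t)) ` T"
    have SD4': "S' \<subseteq> DM R"
    proof
      fix s assume "s \<in> S'"
      then obtain t where t: "t \<in> T" "s = ({}, t)" unfolding S'_def by blast
      have "t \<in> range (udia R)" using T t by blast
      then have t2: "udia R (lbox R t) = t" by (simp only: range_udia)
      have "t \<subseteq> udia R {y}" using U t by blast
      then have t4: "{} \<inter> Sing R = t \<inter> Sing R" using bb_disj[OF y] by blast
      show "s \<in> DM R" unfolding t(2)
        by (rule DMI[OF _ t2 _ t4]) (auto simp: ldia_empty ubox_empty[OF rR] mems)
    qed
    have "SupD R S' = bb R y" unfolding SupD_def S'_def using U ldia_empty ubox_empty[OF rR]
      by (auto simp: image_image)
    then have "lub_in ple (DM R) S' (bb R y)" using lub_SupD[OF rR SD4'] by simp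
    then have "bb R y \<in> S'" using c SD4' unfolding cji_def by blast
    then show "udia R {y} \<in> T" unfolding S'_def by blast
  qed
next
  assume c: "cji (\<subseteq>) (range (udia R)) (udia R {y})"
  show "cji ple (DM R) (bb R y)" unfolding cji_def
  proof (intro conjI allI impI)
    show "bb R y \<in> DM R" using bb_DM[OF y] .
    fix S assume S: "S \<subseteq> DM R" "lub_in ple (DM R) S (bb R y)"
    then have e: "bb R y = SupD R S" using lub_eq[OF rR] by blast
    have T: "snd ` S \<subseteq> range (udia R)"
    proof
      fix t assume "t \<in> snd ` S"
      then obtain s where "s \<in> S" "t = snd s" by blast
      then have "udia R (lbox R t) = t" using DMD(2) S by blast
      then show "t \<in> range (udia R)" by (rule image_eqI[OF sym UNIV_I])
    qed
    have "udia R {y} = \<Union>(snd ` S)" using e unfolding SupD_def by simp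
    then have "lub_in (\<subseteq>) (range (udia R)) (snd ` S) (udia R {y})" using lub_udia_iff[OF T] by blast
    then have "udia R {y} \<in> snd ` S" using c T unfolding cji_def by blast
    then obtain s where s: "s \<in> S" "snd s = udia R {y}" by force
    have "ple s (bb R y)" using S(2) s unfolding lub_in_def by blast
    then have "fst s = {}" unfolding ple_def by simp
    then have "s = bb R y" using s by (simp add: prod_eq_iff)
    then show "bb R y \<in> S" using s by simp
  qed
qed

end


context fixes R :: "('a \<times> 'a) set" assumes rR: "refl R"
begin

lemmas Rx5 = Rxx[OF rR]
lemmas SD5 = SingD[OF rR]

lemma afst: "x \<in> ubox R (ldia R {x})" by (auto simp: mems)

lemma ldia_single_sub: "ldia R {w} \<subseteq> X \<longleftrightarrow> w \<in> ubox R X" by (auto simp: mems)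

lemma C2: "cji ple (DM R) (aa R x) \<longleftrightarrow> cji (\<subseteq>) (range (ldia R)) (ldia R {x})"
proof
  assume c: "cji ple (DM R) (aa R x)"
  show "cji (\<subseteq>) (range (ldia R)) (ldia R {x})" unfolding cji_def
  proof (intro conjI allI impI)
    show "ldia R {x} \<in> range (ldia R)" by blast
    fix T assume T: "T \<subseteq> range (ldia R)" "lub_in (\<subseteq>) (range (ldia R)) T (ldia R {x})"
    then have U: "ldia R {x} = \<Union>T" using lub_ldia_iff by blast
    have tfix: "ldia R (ubox R t) = t" if "t \<in> T" for t
    proof -
      have "t \<in> range (ldia R)" using T that by blast
      then show ?thesis by (simp only: range_ldia)
    qed
    define W where "W = \<Union>(ubox R ` T)"
    define S' where "S' = aa R ` W"
    have SD5': "S' \<subseteq> DM R" unfolding S'_def using aa_DM[OF rR] by blast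
    have Wx: "ldia R {w} \<subseteq> ldia R {x}" if wW: "w \<in> W" for w
    proof -
      obtain t where t: "t \<in> T" "w \<in> ubox R t" using wW unfolding W_def by blast
      then have "ldia R {w} \<subseteq> t" using ldia_single_sub by blast
      then show ?thesis using t U by blast
    qed
    have cover: "\<exists>w\<in>W. (w,v) \<in> R" if vx: "v \<in> ldia R {x}" for v
    proof -
      obtain t where t: "t \<in> T" "v \<in> t" using vx U by blast
      then have "v \<in> ldia R (ubox R t)" using tfix by blast
      then obtain w where "w \<in> ubox R t" "(w,v) \<in> R" by (auto simp: mems)
      then show ?thesis using t unfolding W_def by blast
    qed
    have f: "ldia R (\<Union>(fst ` S')) = ldia R {x}"
    proof (intro equalityI subsetI)
      fix v assume "v \<in> ldia R (\<Union>(fst ` S'))"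
      then obtain w u where wu: "w \<in> W" "u \<in> ubox R (ldia R {w})" "(u,v) \<in> R"
        unfolding S'_def by (auto simp: mems)
      then have "v \<in> ldia R {w}" by (auto simp: mems)
      then show "v \<in> ldia R {x}" using Wx[OF wu(1)] by blast
    next
      fix v assume "v \<in> ldia R {x}"
      then obtain w where w: "w \<in> W" "(w,v) \<in> R" using cover by blast
      then have "w \<in> \<Union>(fst ` S')" unfolding S'_def using afst by force
      then show "v \<in> ldia R (\<Union>(fst ` S'))" using w by (auto simp: mems)
    qed
    have s: "\<Union>(snd ` S') = udia R (ldia R {x})"
    proof (intro equalityI subsetI)
      fix u assume "u \<in> \<Union>(snd ` S')"
      then obtain w where "w \<in> W" "u \<in> udia R (ldia R {w})" unfolding S'_def by auto
      then show "u \<in> udia R (ldia R {x})" using Wx udia_mono by blast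
    next
      fix u assume "u \<in> udia R (ldia R {x})"
      then obtain v where v: "(u,v) \<in> R" "v \<in> ldia R {x}" by (auto simp: mems)
      then obtain w where w: "w \<in> W" "(w,v) \<in> R" using cover by blast
      then have "u \<in> udia R (ldia R {w})" using v by (auto simp: mems)
      then show "u \<in> \<Union>(snd ` S')" using w unfolding S'_def by force
    qed
    have "SupD R S' = aa R x" unfolding SupD_def f s by simp
    then have "lub_in ple (DM R) S' (aa R x)" using lub_SupD[OF rR SD5'] by simp
    then have "aa R x \<in> S'" using c SD5' unfolding cji_def by blast
    then obtain w where w: "w \<in> W" "aa R x = aa R w" unfolding S'_def by blast
    obtain t where t: "t \<in> T" "w \<in> ubox R t" using w(1) unfolding W_def by blast
    have "x \<in> ubox R (ldia R {w})" using w(2) afst[of x] by simp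
    then have "ldia R {x} \<subseteq> ldia R {w}" using ldia_single_sub by blast
    moreover have "ldia R {w} \<subseteq> t" using t ldia_single_sub by blast
    moreover have "t \<subseteq> ldia R {x}" using t U by blast
    ultimately have "t = ldia R {x}" by blast
    then show "ldia R {x} \<in> T" using t by simp
  qed
next
  assume c: "cji (\<subseteq>) (range (ldia R)) (ldia R {x})"
  show "cji ple (DM R) (aa R x)" unfolding cji_def
  proof (intro conjI allI impI)
    show "aa R x \<in> DM R" using aa_DM[OF rR] .
    fix S assume S: "S \<subseteq> DM R" "lub_in ple (DM R) S (aa R x)"
    then have e: "aa R x = SupD R S" using lub_eq[OF rR] by blast
    define W where "W = \<Union>(fst ` S)"
    have e1: "ubox R (ldia R {x}) = ubox R (ldia R W)" using e unfolding SupD_def W_def by simp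
    have Wx: "ldia R {w} \<subseteq> ldia R {x}" if wW: "w \<in> W" for w
    proof -
      obtain s where s: "s \<in> S" "w \<in> fst s" using wW unfolding W_def by blast
      have "ple s (aa R x)" using S(2) s unfolding lub_in_def by blast
      then have "w \<in> ubox R (ldia R {x})" using s unfolding ple_def by auto
      then show ?thesis using ldia_single_sub by blast
    qed
    define T where "T = (\<lambda>w. ldia R {w}) ` W"
    have T: "T \<subseteq> range (ldia R)" unfolding T_def by blast
    have "\<Union>T = ldia R {x}"
    proof (intro equalityI subsetI)
      fix v assume "v \<in> \<Union>T" then show "v \<in> ldia R {x}" using Wx unfolding T_def by blast
    next
      fix v assume v: "v \<in> ldia R {x}"
      have "x \<in> ubox R (ldia R W)" using e1 afst[of x] by simp
      then have "v \<in> ldia R W" using v by (auto simp: mems)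
      then obtain w where "w \<in> W" "(w,v) \<in> R" by (auto simp: mems)
      then show "v \<in> \<Union>T" unfolding T_def by (auto simp: mems)
    qed
    then have "lub_in (\<subseteq>) (range (ldia R)) T (ldia R {x})" using lub_ldia_iff[OF T] by blast
    then have "ldia R {x} \<in> T" using c T unfolding cji_def by blast
    then obtain w where w: "w \<in> W" "ldia R {x} = ldia R {w}" unfolding T_def by blast
    obtain s where s: "s \<in> S" "w \<in> fst s" using w(1) unfolding W_def by blast
    note Ds = DMD[OF subsetD[OF S(1) s(1)]]
    have "ldia R {w} \<subseteq> ldia R (fst s)" using s(2) by (intro ldia_mono) simp
    then have l: "ldia R {x} \<subseteq> ldia R (fst s)" using w(2) by simp
    have a1: "ubox R (ldia R {x}) \<subseteq> fst s" using ubox_mono[OF l, where R=R] Ds(1) by simp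
    have a2: "udia R (ldia R {x}) \<subseteq> snd s" using udia_mono[OF l, where R=R] Ds(3) by (rule order_trans)
    have "ple s (aa R x)" using S(2) s unfolding lub_in_def by blast
    moreover have "ple (aa R x) s" using a1 a2 unfolding ple_def by simp
    ultimately have "s = aa R x" by (rule ple_antisym)
    then show "aa R x \<in> S" using s by simp
  qed
qed

lemma gmap_Inf: "gmap R j = InfD R {a \<in> DM R. \<not> ple a (kneg j)}"
  unfolding gmap_def by (rule Inf_in_eq[OF rR]) blast

lemma g1: assumes y: "y \<notin> Sing R" and z: "z \<in> core R y"
  shows "gmap R (bb R y) = aa R z"
proof -
  have zy: "(z,y) \<in> R" using z unfolding core_def Rinv_def by blast
  have zc: "\<And>v. (z,v) \<in> R \<Longrightarrow> Rinv R y \<subseteq> Rinv R v" using z unfolding core_def Rinv_def by blast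
  show ?thesis unfolding gmap_def
  proof (rule Inf_min[OF rR])
    show "{a \<in> DM R. \<not> ple a (kneg (bb R y))} \<subseteq> DM R" by blast
    have "z \<in> ubox R (ldia R {z})" "z \<in> udia R {y}" using zy by (auto simp: mems)
    then show "aa R z \<in> {a \<in> DM R. \<not> ple a (kneg (bb R y))}"
      using aa_DM[OF rR] unfolding ple_def kneg_def by auto
    show "\<forall>s\<in>{a \<in> DM R. \<not> ple a (kneg (bb R y))}. ple (aa R z) s"
    proof
      fix a assume a: "a \<in> {a \<in> DM R. \<not> ple a (kneg (bb R y))}"
      then have aD: "a \<in> DM R" and "fst a \<inter> udia R {y} \<noteq> {}" unfolding ple_def kneg_def by auto
      then obtain w where w: "w \<in> fst a" "(w,y) \<in> R" by (auto simp: mems)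
      have "ldia R {z} \<subseteq> ldia R {w}"
      proof
        fix v assume "v \<in> ldia R {z}"
        then have "(z,v) \<in> R" by (auto simp: mems)
        then have "w \<in> Rinv R v" using zc w(2) unfolding Rinv_def by blast
        then show "v \<in> ldia R {w}" unfolding Rinv_def by (auto simp: mems)
      qed
      moreover have "ldia R {w} \<subseteq> ldia R (fst a)" using w(1) by (intro ldia_mono) simp
      ultimately have l: "ldia R {z} \<subseteq> ldia R (fst a)" by blast
      note Da = DMD[OF aD]
      have "ubox R (ldia R {z}) \<subseteq> fst a" using ubox_mono[OF l] Da(1) by blast
      moreover have "udia R (ldia R {z}) \<subseteq> snd a" using udia_mono[OF l] Da(3) by blast
      ultimately show "ple (aa R z) a" unfolding ple_def by simp
    qed
  qed
qed

lemma JP: assumes cd: "completely_distributive ple (DM R)" and c: "cji ple (DM R) j"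
  and T: "T \<subseteq> DM R" and le: "ple j (SupD R T)" shows "\<exists>t\<in>T. ple j t"
proof -
  have jD: "j \<in> DM R" using c unfolding cji_def by simp
  define AA where "AA = {{j}, T}"
  have AP: "AA \<subseteq> Pow (DM R)" unfolding AA_def using jD T by blast
  have s1: "Sup_in ple (DM R) {j} = j"
  proof -
    have "Sup_in ple (DM R) {j} = SupD R {j}" using Sup_in_eq[OF rR] jD by blast
    also have "\<dots> = j" unfolding SupD_def using DMD(1)[OF jD] by (simp add: prod_eq_iff)
    finally show ?thesis .
  qed
  have s2: "Sup_in ple (DM R) T = SupD R T" using Sup_in_eq[OF rR T] .
  have "Sup_in ple (DM R) ` AA = {j, SupD R T}" unfolding AA_def using s1 s2 by simp
  moreover have "Inf_in ple (DM R) {j, SupD R T} = j"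
    by (rule Inf_min[OF rR]) (use jD SupD_DM[OF rR T] le ple_refl[of j] in auto)
  moreover have "Inf_in ple (DM R) (Sup_in ple (DM R) ` AA) = Sup_in ple (DM R) {Inf_in ple (DM R) (f ` AA) | f. \<forall>A\<in>AA. f A \<in> A}"
    by (rule cd[unfolded completely_distributive_def, rule_format, OF AP])
  ultimately have e: "j = Sup_in ple (DM R) {Inf_in ple (DM R) (f ` AA) | f. \<forall>A\<in>AA. f A \<in> A}"
    by simp
  define X where "X = {Inf_in ple (DM R) (f ` AA) | f. \<forall>A\<in>AA. f A \<in> A}"
  have XD: "X \<subseteq> DM R"
  proof
    fix a assume "a \<in> X"
    then obtain f where f: "a = Inf_in ple (DM R) (f ` AA)" "\<forall>A\<in>AA. f A \<in> A" unfolding X_def by blast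
    have fD: "f ` AA \<subseteq> DM R" using f(2) AP by blast
    show "a \<in> DM R" using f(1) Inf_in_eq[OF rR fD] InfD_DM[OF rR fD] by simp
  qed
  have "lub_in ple (DM R) X j" using e lub_SupD[OF rR XD] Sup_in_eq[OF rR XD] unfolding X_def by simp
  then have "j \<in> X" using c XD unfolding cji_def by blast
  then obtain f where f: "j = Inf_in ple (DM R) (f ` AA)" "\<forall>A\<in>AA. f A \<in> A" unfolding X_def by blast
  have fD: "f ` AA \<subseteq> DM R" using f(2) AP by blast
  have fT: "f T \<in> T" using f(2) unfolding AA_def by simp
  have "ple j (f T)" using Inf_le[OF rR _ fD] f(1) unfolding AA_def by simp
  then show ?thesis using fT by blast
qed

lemma g2: assumes cd: "completely_distributive ple (DM R)" and y: "y \<notin> Sing R"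
  and c: "cji ple (DM R) (bb R y)"
  shows "plt (bb R y) (gmap R (bb R y))"
proof -
  define G where "G = {a \<in> DM R. \<not> ple a (kneg (bb R y))}"
  have Gm: "a \<in> G \<longleftrightarrow> a \<in> DM R \<and> fst a \<inter> udia R {y} \<noteq> {}" for a
    unfolding G_def ple_def kneg_def by auto
  have g: "gmap R (bb R y) = InfD R G" unfolding G_def by (rule gmap_Inf)
  have "y \<in> lbox R (\<Inter>(snd ` G))"
  proof -
    have "v \<in> snd a" if h: "(v,y) \<in> R" "a \<in> G" for v a
    proof -
      obtain w where w: "w \<in> fst a" "(w,y) \<in> R" using h(2) Gm by (auto simp: mems)
      have "v \<in> udia R (ldia R (fst a))" using w h(1) by (auto simp: mems)
      then show ?thesis using DMD(3)[of a R] h(2) Gm by blast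
    qed
    then show ?thesis by (auto simp: mems)
  qed
  then have "udia R {y} \<subseteq> udia R (lbox R (\<Inter>(snd ` G)))" by (intro udia_mono) simp
  then have le: "ple (bb R y) (gmap R (bb R y))" unfolding g InfD_def ple_def by simp
  have ne: "bb R y \<noteq> gmap R (bb R y)"
  proof
    assume eq: "bb R y = gmap R (bb R y)"
    then have e0: "\<Inter>(fst ` G) = {}" unfolding g InfD_def by simp
    define T where "T = kneg ` G"
    have TD: "T \<subseteq> DM R" unfolding T_def using kneg_DM[of _ R] Gm by blast
    have "\<Union>(snd ` T) = UNIV"
    proof (intro equalityI subsetI)
      fix v :: 'a assume "v \<in> UNIV"
      obtain a where "a \<in> G" "v \<notin> fst a" using e0 by blast
      then show "v \<in> \<Union>(snd ` T)" unfolding T_def kneg_def by force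
    qed simp
    then have "ple (bb R y) (SupD R T)" unfolding SupD_def ple_def by simp
    then obtain t where t: "t \<in> T" "ple (bb R y) t" using JP[OF cd c TD] by blast
    then obtain a where a: "a \<in> G" "t = kneg a" unfolding T_def by blast
    then have "udia R {y} \<subseteq> - fst a" using t(2) unfolding ple_def kneg_def by simp
    then show False using a(1) Gm by blast
  qed
  show ?thesis unfolding plt_def using le ne by simp
qed

lemma g3: assumes x: "x \<notin> Sing R" shows "plt (gmap R (aa R x)) (aa R x)"
proof -
  have xu: "x \<in> udia R {x}" using Rx5 by (auto simp: mems)
  have "bb R x \<in> {a \<in> DM R. \<not> ple a (kneg (aa R x))}"
    using bb_DM[OF rR x] xu afst[of x] unfolding ple_def kneg_def by auto
  then have l1: "ple (gmap R (aa R x)) (bb R x)" unfolding gmap_def by (rule Inf_le[OF rR]) blast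
  have "udia R {x} \<subseteq> udia R (ldia R {x})" using sub_ldia[OF rR] by (intro udia_mono) blast
  then have l2: "ple (bb R x) (aa R x)" unfolding ple_def by simp
  have ne: "gmap R (aa R x) \<noteq> aa R x"
  proof
    assume "gmap R (aa R x) = aa R x"
    then have "ple (aa R x) (bb R x)" using l1 by simp
    then show False using afst[of x] unfolding ple_def by auto
  qed
  show ?thesis unfolding plt_def using ple_trans[OF l1 l2] ne by simp
qed

lemma aa_Sing: assumes x: "x \<in> Sing R" shows "aa R x = ({x}, udia R {x})"
proof -
  have l: "ldia R {x} = {x}" using SD5[OF x] Rx5 by (auto simp: mems)
  have "ubox R {x} = {x}" using SD5[OF x] Rx5 by (auto simp: mems)
  then show ?thesis using l by simp
qed

lemma g4: assumes x: "x \<in> Sing R" shows "gmap R (aa R x) = aa R x"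
proof -
  have e: "aa R x = ({x}, udia R {x})" using aa_Sing[OF x] .
  have xu: "x \<in> udia R {x}" using Rx5 by (auto simp: mems)
  show ?thesis unfolding gmap_def
  proof (rule Inf_min[OF rR])
    show "{a \<in> DM R. \<not> ple a (kneg (aa R x))} \<subseteq> DM R" by blast
    show "aa R x \<in> {a \<in> DM R. \<not> ple a (kneg (aa R x))}"
      using aa_DM[OF rR, of x] xu unfolding e ple_def kneg_def by auto
    show "\<forall>s\<in>{a \<in> DM R. \<not> ple a (kneg (aa R x))}. ple (aa R x) s"
    proof
      fix a assume a: "a \<in> {a \<in> DM R. \<not> ple a (kneg (aa R x))}"
      then have aD: "a \<in> DM R" and h: "fst a \<inter> udia R {x} \<noteq> {} \<or> x \<in> snd a"
        unfolding e ple_def kneg_def by auto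
      note Da = DMD[OF aD]
      have "x \<in> snd a"
      proof (cases "x \<in> snd a")
        case False
        then obtain w where "w \<in> fst a" "(w,x) \<in> R" using h by (auto simp: mems)
        then have "x \<in> udia R (ldia R (fst a))" using Rx5 by (auto simp: mems)
        then show ?thesis using Da(3) by blast
      qed
      then have xa: "x \<in> fst a" using Da(4) x by blast
      have "udia R {x} \<subseteq> udia R (ldia R (fst a))" using xa sub_ldia[OF rR, of "fst a"]
        by (intro udia_mono) blast
      then show "ple (aa R x) a" using xa Da(3) unfolding e ple_def by auto
    qed
  qed
qed

lemma cji_Sing: assumes x: "x \<in> Sing R" shows "cji (\<subseteq>) (range (ldia R)) (ldia R {x})"
proof -
  have l: "ldia R {x} = {x}" using SD5[OF x] Rx5 by (auto simp: mems)
  show ?thesis unfolding cji_def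
  proof (intro conjI allI impI)
    show "ldia R {x} \<in> range (ldia R)" by blast
    fix T assume T: "T \<subseteq> range (ldia R)" "lub_in (\<subseteq>) (range (ldia R)) T (ldia R {x})"
    then have "ldia R {x} = \<Union>T" using lub_ldia_iff[OF T(1)] by blast
    then have U: "{x} = \<Union>T" using l by simp
    then obtain t where t: "t \<in> T" "x \<in> t" by blast
    moreover have "t \<subseteq> {x}" using U t by blast
    ultimately have "t = {x}" by blast
    then show "ldia R {x} \<in> T" using l t by simp
  qed
qed

lemma core_cji: assumes y: "y \<notin> Sing R" and z: "z \<in> core R y"
  shows "cji (\<subseteq>) (range (ldia R)) (ldia R {z})"
  unfolding cji_def
proof (intro conjI allI impI)
  show "ldia R {z} \<in> range (ldia R)" by blast
  fix T assume T: "T \<subseteq> range (ldia R)" "lub_in (\<subseteq>) (range (ldia R)) T (ldia R {z})"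
  then have U: "ldia R {z} = \<Union>T" using lub_ldia_iff by blast
  have zy: "(z,y) \<in> R" using z unfolding core_def Rinv_def by blast
  then have "y \<in> ldia R {z}" by (auto simp: mems)
  then obtain t where t: "t \<in> T" "y \<in> t" using U by blast
  have "t \<in> range (ldia R)" using T t by blast
  then have "ldia R (ubox R t) = t" by (simp only: range_ldia)
  then have "y \<in> ldia R (ubox R t)" using t by simp
  then obtain w where w: "w \<in> ubox R t" "(w,y) \<in> R" by (auto simp: mems)
  have "aa R w \<in> {a \<in> DM R. \<not> ple a (kneg (bb R y))}"
    using aa_DM[OF rR, of w] afst[of w] w(2) unfolding ple_def kneg_def by (auto simp: mems)
  then have "ple (gmap R (bb R y)) (aa R w)" unfolding gmap_def by (rule Inf_le[OF rR]) blast
  then have "ple (aa R z) (aa R w)" using g1[OF y z] by simp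
  then have "z \<in> ubox R (ldia R {w})" using afst[of z] unfolding ple_def by auto
  then have "ldia R {z} \<subseteq> ldia R {w}" using ldia_single_sub by blast
  moreover have "ldia R {w} \<subseteq> t" using w(1) ldia_single_sub by blast
  moreover have "t \<subseteq> ldia R {z}" using t U by blast
  ultimately have "t = ldia R {z}" by blast
  then show "ldia R {z} \<in> T" using t by simp
qed

end


theorem mainTheorem7:
  fixes R :: "('a \<times> 'a) set"
  assumes "refl R"
    and "completely_distributive ple (DM R)"
  shows "Jminus R = {({}, udia R {x}) | x.
            cji (\<subseteq>) (range (udia R)) (udia R {x}) \<and> x \<notin> Sing R}
     \<and> (\<forall>x z. ({}, udia R {x}) \<in> Jminus R \<longrightarrow> z \<in> core R x \<longrightarrow>
            gmap R ({}, udia R {x}) = (ubox R (ldia R {z}), udia R (ldia R {z}))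
            \<and> z \<notin> Sing R \<and> cji (\<subseteq>) (range (ldia R)) (ldia R {z}))
     \<and> Jplus R = {(ubox R (ldia R {x}), udia R (ldia R {x})) | x.
            cji (\<subseteq>) (range (ldia R)) (ldia R {x}) \<and> x \<notin> Sing R}
     \<and> Jcirc R = {({x}, udia R {x}) | x. x \<in> Sing R}"
proof -
  note rR = assms(1) and cd = assms(2)
  have P1: "Jminus R = {bb R x | x. cji (\<subseteq>) (range (udia R)) (udia R {x}) \<and> x \<notin> Sing R}"
  proof (intro equalityI subsetI)
    fix j assume j: "j \<in> Jminus R"
    then have jJ: "j \<in> JDM R" and pl: "plt j (gmap R j)" unfolding Jminus_def by auto
    from JDM_cases[OF rR jJ]
    show "j \<in> {bb R x | x. cji (\<subseteq>) (range (udia R)) (udia R {x}) \<and> x \<notin> Sing R}"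
    proof (elim disjE exE conjE)
      fix x assume e: "j = aa R x"
      show ?thesis
      proof (cases "x \<in> Sing R")
        case True then have "gmap R j = j" using g4[OF rR] e by simp
        then show ?thesis using pl unfolding plt_def by simp
      next
        case False then have "plt (gmap R j) j" using g3[OF rR] e by simp
        then show ?thesis using pl ple_antisym unfolding plt_def by blast
      qed
    next
      fix y assume y: "y \<notin> Sing R" and e: "j = bb R y"
      have "cji (\<subseteq>) (range (udia R)) (udia R {y})" using C1[OF rR y] jJ e unfolding JDM_def by simp
      then show ?thesis using y e by blast
    qed
  next
    fix j assume "j \<in> {bb R x | x. cji (\<subseteq>) (range (udia R)) (udia R {x}) \<and> x \<notin> Sing R}"
    then obtain x where x: "j = bb R x" "cji (\<subseteq>) (range (udia R)) (udia R {x})" "x \<notin> Sing R" by blast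
    have c: "cji ple (DM R) (bb R x)" using C1[OF rR x(3)] x(2) by simp
    have "plt (bb R x) (gmap R (bb R x))" by (rule g2[OF rR cd x(3) c])
    then show "j \<in> Jminus R" using c x(1) unfolding Jminus_def JDM_def by simp
  qed
  have P2: "\<forall>x z. bb R x \<in> Jminus R \<longrightarrow> z \<in> core R x \<longrightarrow>
            gmap R (bb R x) = aa R z \<and> z \<notin> Sing R \<and> cji (\<subseteq>) (range (ldia R)) (ldia R {z})"
  proof (intro allI impI)
    fix x z assume m: "bb R x \<in> Jminus R" and z: "z \<in> core R x"
    have "bb R x \<in> DM R" using m unfolding Jminus_def JDM_def cji_def by simp
    then have xS: "x \<notin> Sing R" by (rule bb_notS[OF rR])
    have zx: "(z,x) \<in> R" using z unfolding core_def Rinv_def by blast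
    have zS: "z \<notin> Sing R"
    proof
      assume "z \<in> Sing R"
      then have "x = z" using SingD[OF rR _ zx] by blast
      then show False using xS \<open>z \<in> Sing R\<close> by simp
    qed
    show "gmap R (bb R x) = aa R z \<and> z \<notin> Sing R \<and> cji (\<subseteq>) (range (ldia R)) (ldia R {z})"
      using g1[OF rR xS z] zS core_cji[OF rR xS z] by simp
  qed
  have P3: "Jplus R = {aa R x | x. cji (\<subseteq>) (range (ldia R)) (ldia R {x}) \<and> x \<notin> Sing R}"
  proof (intro equalityI subsetI)
    fix j assume j: "j \<in> Jplus R"
    then have jJ: "j \<in> JDM R" and pl: "plt (gmap R j) j" unfolding Jplus_def by auto
    from JDM_cases[OF rR jJ]
    show "j \<in> {aa R x | x. cji (\<subseteq>) (range (ldia R)) (ldia R {x}) \<and> x \<notin> Sing R}"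
    proof (elim disjE exE conjE)
      fix x assume e: "j = aa R x"
      show ?thesis
      proof (cases "x \<in> Sing R")
        case True then have "gmap R j = j" using g4[OF rR] e by simp
        then show ?thesis using pl unfolding plt_def by simp
      next
        case False
        have "cji (\<subseteq>) (range (ldia R)) (ldia R {x})" using C2[OF rR] jJ e unfolding JDM_def by simp
        then show ?thesis using False e by blast
      qed
    next
      fix y assume y: "y \<notin> Sing R" and e: "j = bb R y"
      have c: "cji ple (DM R) (bb R y)" using jJ e unfolding JDM_def by simp
      have "plt (bb R y) (gmap R (bb R y))" by (rule g2[OF rR cd y c])
      then show ?thesis using pl e ple_antisym unfolding plt_def by blast
    qed
  next
    fix j assume "j \<in> {aa R x | x. cji (\<subseteq>) (range (ldia R)) (ldia R {x}) \<and> x \<notin> Sing R}"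
    then obtain x where x: "j = aa R x" "cji (\<subseteq>) (range (ldia R)) (ldia R {x})" "x \<notin> Sing R" by blast
    have c: "cji ple (DM R) (aa R x)" using C2[OF rR] x(2) by simp
    have "plt (gmap R (aa R x)) (aa R x)" by (rule g3[OF rR x(3)])
    then show "j \<in> Jplus R" using c x(1) unfolding Jplus_def JDM_def by simp
  qed
  have P4: "Jcirc R = {({x}, udia R {x}) | x. x \<in> Sing R}"
  proof (intro equalityI subsetI)
    fix j assume j: "j \<in> Jcirc R"
    then have jJ: "j \<in> JDM R" and pl: "j = gmap R j" unfolding Jcirc_def by auto
    from JDM_cases[OF rR jJ]
    show "j \<in> {({x}, udia R {x}) | x. x \<in> Sing R}"
    proof (elim disjE exE conjE)
      fix x assume e: "j = aa R x"
      show ?thesis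
      proof (cases "x \<in> Sing R")
        case True then show ?thesis using aa_Sing[OF rR True] e by blast
      next
        case False then have "plt (gmap R j) j" using g3[OF rR] e by simp
        then show ?thesis using pl unfolding plt_def by simp
      qed
    next
      fix y assume y: "y \<notin> Sing R" and e: "j = bb R y"
      have c: "cji ple (DM R) (bb R y)" using jJ e unfolding JDM_def by simp
      have "plt (bb R y) (gmap R (bb R y))" by (rule g2[OF rR cd y c])
      then show ?thesis using pl e unfolding plt_def by simp
    qed
  next
    fix j assume "j \<in> {({x}, udia R {x}) | x. x \<in> Sing R}"
    then obtain x where x: "j = ({x}, udia R {x})" "x \<in> Sing R" by blast
    have e: "j = aa R x" using aa_Sing[OF rR x(2)] x(1) by simp
    have c: "cji ple (DM R) (aa R x)" using C2[OF rR] cji_Sing[OF rR x(2)] by simp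
    have "gmap R (aa R x) = aa R x" by (rule g4[OF rR x(2)])
    then show "j \<in> Jcirc R" using c e unfolding Jcirc_def JDM_def by simp
  qed
  show ?thesis using P1 P2 P3 P4 by blast
qed


end
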